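(* Let $n\ge 2$ and let $g(q)=q^{n}+q^{n-1}a_{n-1}+\dots+qa_1+a_0$ with $a_0,\dots,a_{n-1}\in\mathbb{H}$ and $a_1,\dots,a_{n-1}\neq 0$. Then every zero $q\in\mathbb{H}$ of $g$ satisfies $$|q|\le \max\Big\{\Big|\frac{a_0}{a_1}\Big|,\ 2\Big|\frac{a_1}{a_2}\Big|,\ 2\Big|\frac{a_2}{a_3}\Big|,\ \dots,\ 2\Big|\frac{a_{n-2}}{a_{n-1}}\Big|,\ 2|a_{n-1}|\Big\}.$$
   Context: $\mathbb{H}$ denotes the real quaternions with norm $|q|=\sqrt{q\bar q}$ (Euclidean norm on $\mathbb{R}^4$); $|a/b|$ means $|a|/|b|$. The polynomial $g$ is evaluated at $q\in\mathbb{H}$ by direct substitution, $g(q)=q^n+q^{n-1}a_{n-1}+\dots+qa_1+a_0$ (coefficients to the right of the powers); a zero of $g$ is a $q\in\mathbb{H}$ with $g(q)=0$. *)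

theory Defs
  imports Complex_Main
begin

text \<open>Real quaternions q = Re + Im1 i + Im2 j + Im3 k, with i^2=j^2=k^2=ijk=-1.\<close>

datatype quat = Quat (Re: real) (Im1: real) (Im2: real) (Im3: real)

lemma quat_eqI: "Re a = Re b \<Longrightarrow> Im1 a = Im1 b \<Longrightarrow> Im2 a = Im2 b \<Longrightarrow> Im3 a = Im3 b \<Longrightarrow> a = b"
  by (cases a; cases b) auto

instantiation quat :: ring_1
begin
definition "0 = Quat 0 0 0 0"
definition "1 = Quat 1 0 0 0"
definition "a + b = Quat (Re a + Re b) (Im1 a + Im1 b) (Im2 a + Im2 b) (Im3 a + Im3 b)"
definition "a - b = Quat (Re a - Re b) (Im1 a - Im1 b) (Im2 a - Im2 b) (Im3 a - Im3 b)"
definition "- a = Quat (- Re a) (- Im1 a) (- Im2 a) (- Im3 a)"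
definition "a * b = Quat
   (Re a * Re b - Im1 a * Im1 b - Im2 a * Im2 b - Im3 a * Im3 b)
   (Re a * Im1 b + Im1 a * Re b + Im2 a * Im3 b - Im3 a * Im2 b)
   (Re a * Im2 b - Im1 a * Im3 b + Im2 a * Re b + Im3 a * Im1 b)
   (Re a * Im3 b + Im1 a * Im2 b - Im2 a * Im1 b + Im3 a * Re b)"
instance
  by standard (auto intro!: quat_eqI simp: zero_quat_def one_quat_def plus_quat_def
      minus_quat_def uminus_quat_def times_quat_def algebra_simps)
end

definition qnorm :: "quat \<Rightarrow> real" where
  "qnorm q = sqrt ((Re q)\<^sup>2 + (Im1 q)\<^sup>2 + (Im2 q)\<^sup>2 + (Im3 q)\<^sup>2)"

definition qpoly_eval :: "nat \<Rightarrow> (nat \<Rightarrow> quat) \<Rightarrow> quat \<Rightarrow> quat" where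
  "qpoly_eval n a q = q ^ n + (\<Sum>k<n. q ^ k * a k)"

end

theory Submission
  imports Defs
begin

lemma qnorm_sq: "(qnorm q)^2 = (Re q)\<^sup>2 + (Im1 q)\<^sup>2 + (Im2 q)\<^sup>2 + (Im3 q)\<^sup>2"
  unfolding qnorm_def by (simp add: add_nonneg_nonneg)

lemma qnorm_nonneg: "qnorm q \<ge> 0" unfolding qnorm_def by simp

lemma qnorm_mult: "qnorm (a * b) = qnorm a * qnorm b"
proof -
  have "(qnorm (a*b))^2 = (qnorm a * qnorm b)^2"
    unfolding power_mult_distrib qnorm_sq
    by (simp add: times_quat_def power2_eq_square algebra_simps)
  thus ?thesis using qnorm_nonneg
    by (metis mult_nonneg_nonneg power2_eq_imp_eq)
qed

lemma qnorm_one: "qnorm 1 = 1" by (simp add: qnorm_def one_quat_def)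
lemma qnorm_zero: "qnorm 0 = 0" by (simp add: qnorm_def zero_quat_def)
lemma qnorm_uminus: "qnorm (- a) = qnorm a" by (simp add: qnorm_def uminus_quat_def)

lemma qnorm_pow: "qnorm (q ^ k) = qnorm q ^ k"
  by (induction k) (simp_all add: qnorm_one qnorm_mult)

lemma qnorm_pos: "a \<noteq> 0 \<Longrightarrow> qnorm a > 0"
proof (rule ccontr)
  assume a: "a \<noteq> 0" and "\<not> qnorm a > 0"
  hence "qnorm a = 0" using qnorm_nonneg[of a] by simp
  hence s: "(Re a)\<^sup>2 + (Im1 a)\<^sup>2 + (Im2 a)\<^sup>2 + (Im3 a)\<^sup>2 = 0"
    using qnorm_sq[of a] by simp
  have "(Re a)\<^sup>2 \<ge> 0" "(Im1 a)\<^sup>2 \<ge> 0" "(Im2 a)\<^sup>2 \<ge> 0" "(Im3 a)\<^sup>2 \<ge> 0" by simp_all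
  hence "(Re a)\<^sup>2 = 0" "(Im1 a)\<^sup>2 = 0" "(Im2 a)\<^sup>2 = 0" "(Im3 a)\<^sup>2 = 0" using s by linarith+
  hence "a = 0" by (intro quat_eqI) (simp_all add: zero_quat_def)
  thus False using a by simp
qed

lemma sqrt4_tri:
  fixes x1 x2 x3 x4 y1 y2 y3 y4 :: real
  shows "sqrt ((x1+y1)\<^sup>2 + (x2+y2)\<^sup>2 + (x3+y3)\<^sup>2 + (x4+y4)\<^sup>2)
     \<le> sqrt (x1\<^sup>2 + x2\<^sup>2 + x3\<^sup>2 + x4\<^sup>2) + sqrt (y1\<^sup>2 + y2\<^sup>2 + y3\<^sup>2 + y4\<^sup>2)"
proof -
  define X where "X = x1\<^sup>2 + x2\<^sup>2 + x3\<^sup>2 + x4\<^sup>2"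
  define Y where "Y = y1\<^sup>2 + y2\<^sup>2 + y3\<^sup>2 + y4\<^sup>2"
  define P where "P = x1*y1+x2*y2+x3*y3+x4*y4"
  have X: "X \<ge> 0" and Y: "Y \<ge> 0" unfolding X_def Y_def by simp_all
  have cs: "P^2 \<le> X * Y"
  proof -
    have "X * Y - P^2 =
      (x1*y2-x2*y1)^2 + (x1*y3-x3*y1)^2 + (x1*y4-x4*y1)^2 + (x2*y3-x3*y2)^2
      + (x2*y4-x4*y2)^2 + (x3*y4-x4*y3)^2"
      unfolding X_def Y_def P_def by (simp add: power2_eq_square algebra_simps)
    moreover have "(x1*y2-x2*y1)^2 + (x1*y3-x3*y1)^2 + (x1*y4-x4*y1)^2 + (x2*y3-x3*y2)^2
      + (x2*y4-x4*y2)^2 + (x3*y4-x4*y3)^2 \<ge> 0" by simp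
    ultimately show ?thesis by linarith
  qed
  have "P \<le> \<bar>P\<bar>" by simp
  also have "\<bar>P\<bar> = sqrt (P^2)" by simp
  also have "\<dots> \<le> sqrt (X*Y)" using cs by (rule real_sqrt_le_mono)
  also have "\<dots> = sqrt X * sqrt Y" by (rule real_sqrt_mult)
  finally have PX: "P \<le> sqrt X * sqrt Y" .
  have e1: "(x1+y1)\<^sup>2 + (x2+y2)\<^sup>2 + (x3+y3)\<^sup>2 + (x4+y4)\<^sup>2 = X + Y + 2*P"
    unfolding X_def Y_def P_def by (simp add: power2_eq_square algebra_simps)
  have e2: "(sqrt X + sqrt Y)^2 = X + Y + 2 * (sqrt X * sqrt Y)"
    using X Y by (simp add: power2_eq_square algebra_simps)
  have "X + Y + 2*P \<le> (sqrt X + sqrt Y)^2" using e2 PX by simp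
  hence "sqrt (X + Y + 2*P) \<le> sqrt ((sqrt X + sqrt Y)^2)" by (rule real_sqrt_le_mono)
  also have "\<dots> = sqrt X + sqrt Y" using X Y by simp
  finally have "sqrt (X + Y + 2*P) \<le> sqrt X + sqrt Y" .
  thus ?thesis unfolding e1 X_def[symmetric] Y_def[symmetric] .
qed

lemma qnorm_add: "qnorm (a + b) \<le> qnorm a + qnorm b"
  unfolding qnorm_def plus_quat_def using sqrt4_tri by simp

lemma qnorm_sum: "finite A \<Longrightarrow> qnorm (sum f A) \<le> (\<Sum>x\<in>A. qnorm (f x))"
proof (induction A rule: finite_induct)
  case empty then show ?case by (simp add: qnorm_zero)
next
  case (insert x F)
  then show ?case using qnorm_add[of "f x" "sum f F"] by simp
qed

lemma chain:
  fixes c :: "nat \<Rightarrow> real"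
  assumes "c 0 < c 1" "\<forall>k. 1 \<le> k \<and> k < n \<longrightarrow> 2 * c k < c (Suc k)" "n \<ge> 1"
  shows "sum c {..<n} < c n"
  using assms
proof (induction n)
  case 0 then show ?case by simp
next
  case (Suc m)
  show ?case
  proof (cases "m = 0")
    case True then show ?thesis using Suc by simp
  next
    case False
    hence "sum c {..<m} < c m" using Suc by auto
    moreover have "2 * c m < c (Suc m)" using Suc False by auto
    ultimately show ?thesis by simp
  qed
qed

theorem corollary1:
  fixes n :: nat and a :: "nat \<Rightarrow> quat" and q :: quat
  assumes "n \<ge> 2"
    and "\<forall>k\<in>{1..n-1}. a k \<noteq> 0"
    and "qpoly_eval n a q = 0"
  shows "qnorm q \<le> Max ({qnorm (a 0) / qnorm (a 1), 2 * qnorm (a (n-1))}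
            \<union> {2 * (qnorm (a k) / qnorm (a (k+1))) | k. 1 \<le> k \<and> k \<le> n - 2})"
proof (rule ccontr)
  define S where "S = ({qnorm (a 0) / qnorm (a 1), 2 * qnorm (a (n-1))}
            \<union> {2 * (qnorm (a k) / qnorm (a (k+1))) | k. 1 \<le> k \<and> k \<le> n - 2})"
  define r where "r = qnorm q"
  assume "\<not> qnorm q \<le> Max ({qnorm (a 0) / qnorm (a 1), 2 * qnorm (a (n-1))}
            \<union> {2 * (qnorm (a k) / qnorm (a (k+1))) | k. 1 \<le> k \<and> k \<le> n - 2})"
  hence rM: "Max S < r" unfolding S_def r_def by (simp only: not_le)
  have "{2 * (qnorm (a k) / qnorm (a (k+1))) | k. 1 \<le> k \<and> k \<le> n - 2}
      \<subseteq> (\<lambda>k. 2 * (qnorm (a k) / qnorm (a (k+1)))) ` {1..n-2}" by auto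
  hence fin: "finite S" unfolding S_def by (meson finite_Un finite.intros finite_atLeastAtMost finite_imageI finite_subset)
  have lt: "x < r" if "x \<in> S" for x using Max_ge[OF fin that] rM by simp
  have pos: "qnorm (a k) > 0" if "1 \<le> k" "k \<le> n - 1" for k
    using assms(2) that qnorm_pos by auto
  have h0: "qnorm (a 0) / qnorm (a 1) < r" by (rule lt) (simp add: S_def)
  have hn: "2 * qnorm (a (n-1)) < r" by (rule lt) (simp add: S_def)
  have hk: "2 * (qnorm (a k) / qnorm (a (k+1))) < r" if "1 \<le> k" "k \<le> n - 2" for k
  proof (rule lt)
    show "2 * (qnorm (a k) / qnorm (a (k+1))) \<in> S" unfolding S_def using that by blast
  qed
  have "qnorm (a (n-1)) > 0" using pos[of "n-1"] assms(1) by simp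
  hence rpos: "r > 0" using hn by simp
  define c where "c k = (if k < n then r^k * qnorm (a k) else r^n)" for k
  have c01: "c 0 < c 1"
  proof -
    have "qnorm (a 0) < r * qnorm (a 1)" using h0 pos[of 1] assms(1)
      by (simp add: divide_less_eq mult.commute)
    thus ?thesis using assms(1) by (simp add: c_def)
  qed
  have cstep: "\<forall>k. 1 \<le> k \<and> k < n \<longrightarrow> 2 * c k < c (Suc k)"
  proof (intro allI impI)
    fix k assume k: "1 \<le> k \<and> k < n"
    show "2 * c k < c (Suc k)"
    proof (cases "Suc k = n")
      case True
      hence "k = n - 1" by simp
      hence "2 * qnorm (a k) < r" using hn by simp
      hence "r^k * (2 * qnorm (a k)) < r^k * r" using rpos by simp
      moreover have "r^n = r^k * r" using True by (metis power_Suc2)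
      ultimately show ?thesis using True k by (simp add: c_def algebra_simps)
    next
      case False
      have sk: "Suc k \<le> n - 1" using k False by arith
      have "k \<le> n - 2" using k False by arith
      hence "2 * (qnorm (a k) / qnorm (a (k+1))) < r" using hk k by blast
      moreover have "qnorm (a (Suc k)) > 0" using pos[of "k+1"] sk by simp
      ultimately have "2 * qnorm (a k) < r * qnorm (a (Suc k))"
        by (simp add: divide_less_eq)
      hence "r^k * (2 * qnorm (a k)) < r^k * (r * qnorm (a (Suc k)))" using rpos by simp
      thus ?thesis using False k by (simp add: c_def algebra_simps)
    qed
  qed
  have "sum c {..<n} < c n" using chain[OF c01 cstep] assms(1) by simp
  hence less: "(\<Sum>k<n. qnorm (q^k * a k)) < r^n"
    by (simp add: c_def qnorm_mult qnorm_pow r_def)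
  have "q ^ n = - (\<Sum>k<n. q ^ k * a k)" using assms(3) unfolding qpoly_eval_def
    by (simp add: eq_neg_iff_add_eq_0)
  hence "r ^ n = qnorm (\<Sum>k<n. q ^ k * a k)" by (simp add: r_def qnorm_pow[symmetric] qnorm_uminus)
  also have "\<dots> \<le> (\<Sum>k<n. qnorm (q^k * a k))" by (rule qnorm_sum) simp
  finally show False using less by simp
qed

end
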